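(* Let $J$ be an abelian topological semigroup with identity $0$, $X$ a topological vector space over $\mathbf{C}$, and $\phi\in P^n(J,X)$, so that $\phi(t+ms)=\sum_{j=0}^n a_j(t,s)m^j$ for all $t,s\in J$, $m\in\mathbf{Z}_+$, with $a_j(t,s)\in X$. Then $a_n(t,s)=a_n(0,s)$ for all $t,s\in J$.
   Context: $\mathbf{Z}_+=\{0,1,2,\dots\}$. A continuous $p:J\to X$ is a polynomial of degree at most $n$ if for all $s,t\in J$ the map $m\mapsto p(s+mt)$, $m\in\mathbf{Z}_+$, is a polynomial in $m$ of degree at most $n$ with coefficients in $X$; $P^n(J,X)$ is the space of such polynomials. *)

theory Defs
  imports "HOL-Analysis.Analysis"
begin

definition complex_tvs :: "(complex \<Rightarrow> 'b::{ab_group_add,topological_space} \<Rightarrow> 'b) \<Rightarrow> bool" where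
  "complex_tvs scaleC \<longleftrightarrow>
     vector_space scaleC \<and>
     continuous_on UNIV (\<lambda>(x::'b, y::'b). x + y) \<and>
     continuous_on UNIV (\<lambda>(c::complex, x::'b). scaleC c x)"

definition nsmul :: "nat \<Rightarrow> 'a::comm_monoid_add \<Rightarrow> 'a" where
  "nsmul m t = (\<Sum>i<m. t)"

definition poly_space ::
  "(complex \<Rightarrow> 'b::{ab_group_add,topological_space} \<Rightarrow> 'b) \<Rightarrow> nat
     \<Rightarrow> ('a::{comm_monoid_add,topological_space} \<Rightarrow> 'b) set" where
  "poly_space scaleC n = {p. continuous_on UNIV p \<and>
     (\<forall>s t. \<exists>c :: nat \<Rightarrow> 'b. \<forall>m::nat.
        p (s + nsmul m t) = (\<Sum>j\<le>n. scaleC (of_nat (m ^ j)) (c j)))}"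

end

theory Submission imports Defs "HOL-Computational_Algebra.Polynomial" begin

definition lag :: "nat \<Rightarrow> nat \<Rightarrow> complex poly" where
  "lag N m = smult (1 / (\<Prod>r\<in>{..N}-{m}. (of_nat m - of_nat r)))
                   (\<Prod>r\<in>{..N}-{m}. [:- of_nat r, 1:])"

lemma lag_eval:
  assumes "r \<le> N" "m \<le> N"
  shows "poly (lag N m) (of_nat r) = (if r = m then 1 else 0)"
proof (cases "r = m")
  case True
  have "(\<Prod>r\<in>{..N}-{m}. (of_nat m - of_nat r :: complex)) \<noteq> 0"
    by (subst prod_zero_iff) auto
  then show ?thesis using True by (simp add: lag_def poly_prod)
next
  case False
  then have "r \<in> {..N}-{m}" using assms by auto
  then have "(\<Prod>r'\<in>{..N}-{m}. poly [:- of_nat r', 1:] (of_nat r :: complex)) = 0"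
    by (intro prod_zero) auto
  then show ?thesis using False by (simp add: lag_def poly_prod)
qed

lemma lag_degree:
  assumes "m \<le> N"
  shows "degree (lag N m) \<le> N"
proof -
  have "degree (\<Prod>r\<in>{..N}-{m}. [:- of_nat r, 1:] :: complex poly) \<le> sum (degree \<circ> (\<lambda>r. [:- of_nat r, 1:] :: complex poly)) ({..N}-{m})"
    by (rule degree_prod_sum_le) auto
  also have "\<dots> = card ({..N}-{m})" by simp
  also have "\<dots> = N" using assms by simp
  finally show ?thesis unfolding lag_def using degree_smult_le order_trans by blast
qed

lemma lag_sum:
  assumes "i \<le> N"
  shows "(\<Sum>m\<le>N. smult (of_nat m ^ i) (lag N m)) = monom 1 i"
proof (rule poly_eqI_degree[where A = "of_nat ` {..N}"])
  fix x assume "x \<in> (of_nat ` {..N} :: complex set)"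
  then obtain r where r: "r \<le> N" "x = of_nat r" by auto
  have "poly (\<Sum>m\<le>N. smult (of_nat m ^ i) (lag N m)) x = (\<Sum>m\<le>N. of_nat m ^ i * (if r = m then 1 else 0))"
    using r by (simp add: poly_sum lag_eval)
  also have "\<dots> = (\<Sum>m\<le>N. if m = r then of_nat m ^ i else 0)"
    by (intro sum.cong) auto
  also have "\<dots> = of_nat r ^ i" using r by (simp add: sum.delta')
  finally show "poly (\<Sum>m\<le>N. smult (of_nat m ^ i) (lag N m)) x = poly (monom 1 i) x"
    using r by (simp add: poly_monom)
next
  have c: "card (of_nat ` {..N} :: complex set) = Suc N"
    by (subst card_image) (auto simp: inj_on_def)
  have "degree (\<Sum>m\<le>N. smult (of_nat m ^ i) (lag N m)) \<le> N"
    by (rule degree_sum_le) (auto intro: order_trans[OF degree_smult_le] lag_degree)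
  then show "degree (\<Sum>m\<le>N. smult (of_nat m ^ i) (lag N m)) < card (of_nat ` {..N} :: complex set)"
    using c by simp
  show "degree (monom (1::complex) i) < card (of_nat ` {..N} :: complex set)"
    using c assms by (simp add: degree_monom_eq)
qed

lemma coeff_recover:
  fixes sc :: "complex \<Rightarrow> 'b::ab_group_add \<Rightarrow> 'b"
  assumes vs: "vector_space sc"
    and p: "\<forall>m. p m = (\<Sum>j\<le>N. sc (of_nat (m^j)) (c j))" and j: "j \<le> N"
  shows "c j = (\<Sum>m\<le>N. sc (coeff (lag N m) j) (p m))"
proof -
  interpret vector_space sc by (rule vs)
  have "(\<Sum>m\<le>N. sc (coeff (lag N m) j) (p m))
      = (\<Sum>m\<le>N. \<Sum>i\<le>N. sc (coeff (lag N m) j * of_nat m ^ i) (c i))"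
    by (simp add: p scale_sum_right)
  also have "\<dots> = (\<Sum>i\<le>N. \<Sum>m\<le>N. sc (coeff (lag N m) j * of_nat m ^ i) (c i))"
    by (rule sum.swap)
  also have "\<dots> = (\<Sum>i\<le>N. sc (coeff (\<Sum>m\<le>N. smult (of_nat m ^ i) (lag N m)) j) (c i))"
    by (simp add: scale_sum_left coeff_sum mult.commute)
  also have "\<dots> = (\<Sum>i\<le>N. sc (if i = j then 1 else 0) (c i))"
    by (intro sum.cong refl) (simp add: lag_sum coeff_monom)
  also have "\<dots> = (\<Sum>i\<le>N. if i = j then c i else 0)"
    by (intro sum.cong) auto
  also have "\<dots> = c j" using j by (simp add: sum.delta')
  finally show ?thesis by simp
qed


lemma coeff_unique:
  fixes sc :: "complex \<Rightarrow> 'b::ab_group_add \<Rightarrow> 'b"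
  assumes vs: "vector_space sc"
    and eq: "\<forall>m. (\<Sum>j\<le>N. sc (of_nat (m^j)) (c j)) = (\<Sum>j\<le>N. sc (of_nat (m^j)) (d j))"
    and j: "j \<le> N"
  shows "c j = d j"
proof -
  have "c j = (\<Sum>m\<le>N. sc (coeff (lag N m) j) ((\<lambda>m. \<Sum>j\<le>N. sc (of_nat (m^j)) (c j)) m))"
    by (rule coeff_recover[OF vs _ j]) simp
  moreover have "d j = (\<Sum>m\<le>N. sc (coeff (lag N m) j) ((\<lambda>m. \<Sum>j\<le>N. sc (of_nat (m^j)) (c j)) m))"
    apply (rule coeff_recover[OF vs _ j]) using eq by auto
  ultimately show ?thesis by simp
qed

lemma nsmul_0 [simp]: "nsmul 0 t = 0" by (simp add: nsmul_def)
lemma nsmul_1 [simp]: "nsmul (Suc 0) t = t" by (simp add: nsmul_def)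
lemma nsmul_add: "nsmul (a + b) t = nsmul a t + nsmul b t"
  by (induction b) (simp_all add: nsmul_def add.assoc)
lemma nsmul_distrib: "nsmul m (x + y) = nsmul m x + nsmul m y"
  by (induction m) (simp_all add: nsmul_def algebra_simps)
lemma nsmul_Suc: "nsmul (Suc b) t = t + nsmul b t"
  by (simp add: nsmul_def add.commute)
lemma nsmul_mult: "nsmul (a * b) t = nsmul b (nsmul a t)"
  by (induction b) (simp_all add: nsmul_add nsmul_Suc)

lemma regroup:
  fixes f :: "nat \<Rightarrow> nat \<Rightarrow> 'a::comm_monoid_add"
  shows "(\<Sum>i\<le>n. \<Sum>j\<le>n. f i (i+j)) = (\<Sum>d\<le>2*n. \<Sum>i\<le>n. if i \<le> d \<and> d - i \<le> n then f i d else 0)"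
proof -
  have "(\<Sum>j\<le>n. f i (i+j)) = (\<Sum>d\<le>2*n. if i \<le> d \<and> d - i \<le> n then f i d else 0)" if "i \<le> n" for i
  proof -
    have "(\<Sum>j\<le>n. f i (i+j)) = sum (f i) ((+) i ` {..n})"
      by (subst sum.reindex) (auto simp: inj_on_def)
    also have "(+) i ` {..n} = {d\<in>{..2*n}. i \<le> d \<and> d - i \<le> n}"
      using that by (auto simp: image_iff, rule_tac x="x - i" in bexI, auto)
    also have "sum (f i) \<dots> = (\<Sum>d\<le>2*n. if i \<le> d \<and> d - i \<le> n then f i d else 0)"
      by (rule sum.inter_filter) simp
    finally show ?thesis .
  qed
  then have "(\<Sum>i\<le>n. \<Sum>j\<le>n. f i (i+j)) = (\<Sum>i\<le>n. \<Sum>d\<le>2*n. if i \<le> d \<and> d - i \<le> n then f i d else 0)"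
    by (intro sum.cong[OF refl]) simp
  also have "\<dots> = (\<Sum>d\<le>2*n. \<Sum>i\<le>n. if i \<le> d \<and> d - i \<le> n then f i d else 0)"
    by (rule sum.swap)
  finally show ?thesis .
qed


theorem lemma2p1:
  fixes scaleC :: "complex \<Rightarrow> 'b::{ab_group_add,topological_space} \<Rightarrow> 'b"
    and \<phi> :: "'a::topological_comm_monoid_add \<Rightarrow> 'b"
    and n :: nat
    and a :: "nat \<Rightarrow> 'a \<Rightarrow> 'a \<Rightarrow> 'b"
  assumes "complex_tvs scaleC"
    and "\<phi> \<in> poly_space scaleC n"
    and "\<forall>t s. \<forall>m::nat. \<phi> (t + nsmul m s) = (\<Sum>j\<le>n. scaleC (of_nat (m ^ j)) (a j t s))"
  shows "\<forall>t s. a n t s = a n 0 s"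
proof (intro allI)
  fix t s
  have vs: "vector_space scaleC" using assms(1) by (simp add: complex_tvs_def)
  interpret vector_space scaleC by (rule vs)
  note H = assms(3)[rule_format]
  define F where "F k m = \<phi> (nsmul k t + nsmul m s)" for k m
  define E where "E i j = (\<Sum>m'\<le>n. scaleC (coeff (lag n m') j) (a i (nsmul m' s) t))" for i j
  have F1: "F k m = (\<Sum>j\<le>n. scaleC (of_nat (m ^ j)) (a j (nsmul k t) s))" for k m
    unfolding F_def by (rule H)
  have F2: "F k m = (\<Sum>i\<le>n. scaleC (of_nat (k ^ i)) (a i (nsmul m s) t))" for k m
    unfolding F_def by (subst add.commute) (rule H)
  have A: "a j (nsmul k t) s = (\<Sum>i\<le>n. scaleC (of_nat (k ^ i)) (E i j))" if "j \<le> n" for j k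
  proof -
    have "a j (nsmul k t) s = (\<Sum>m'\<le>n. scaleC (coeff (lag n m') j) (F k m'))"
      by (rule coeff_recover[OF vs _ that]) (simp add: F1)
    also have "\<dots> = (\<Sum>m'\<le>n. \<Sum>i\<le>n. scaleC (of_nat (k ^ i)) (scaleC (coeff (lag n m') j) (a i (nsmul m' s) t)))"
      by (simp add: F2 scale_sum_right mult.commute)
    also have "\<dots> = (\<Sum>i\<le>n. \<Sum>m'\<le>n. scaleC (of_nat (k ^ i)) (scaleC (coeff (lag n m') j) (a i (nsmul m' s) t)))"
      by (rule sum.swap)
    also have "\<dots> = (\<Sum>i\<le>n. scaleC (of_nat (k ^ i)) (E i j))"
      by (simp add: E_def scale_sum_right)
    finally show ?thesis .
  qed
  define G where "G q d = (\<Sum>i\<le>n. if i \<le> d \<and> d - i \<le> n then scaleC (of_nat (q ^ i)) (E i (d - i)) else 0)" for q d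
  have line: "(\<Sum>d\<le>2*n. scaleC (of_nat (m ^ d)) (G q d))
     = (\<Sum>d\<le>2*n. scaleC (of_nat (m ^ d)) (if d \<le> n then a d 0 (nsmul q t + s) else 0))" for q m
  proof -
    have "F (q * m) m = \<phi> (0 + nsmul m (nsmul q t + s))"
      by (simp add: F_def nsmul_distrib nsmul_mult[symmetric])
    also have "\<dots> = (\<Sum>d\<le>n. scaleC (of_nat (m ^ d)) (a d 0 (nsmul q t + s)))" by (rule H)
    also have "\<dots> = (\<Sum>d\<in>{d\<in>{..2*n}. d \<le> n}. scaleC (of_nat (m ^ d)) (a d 0 (nsmul q t + s)))"
      by (intro sum.cong) auto
    also have "\<dots> = (\<Sum>d\<le>2*n. scaleC (of_nat (m ^ d)) (if d \<le> n then a d 0 (nsmul q t + s) else 0))"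
      by (subst sum.inter_filter) (auto intro: sum.cong)
    finally have 1: "F (q * m) m = \<dots>" .
    have "F (q * m) m = (\<Sum>j\<le>n. scaleC (of_nat (m ^ j)) (\<Sum>i\<le>n. scaleC (of_nat ((q*m) ^ i)) (E i j)))"
      by (simp add: F1 A)
    also have "\<dots> = (\<Sum>j\<le>n. \<Sum>i\<le>n. scaleC (of_nat (m ^ (i + j))) (scaleC (of_nat (q ^ i)) (E i j)))"
      by (simp add: scale_sum_right power_add power_mult_distrib mult_ac)
    also have "\<dots> = (\<Sum>i\<le>n. \<Sum>j\<le>n. (\<lambda>i d. scaleC (of_nat (m ^ d)) (scaleC (of_nat (q ^ i)) (E i (d - i)))) i (i + j))"
      by (subst sum.swap) simp
    also have "\<dots> = (\<Sum>d\<le>2*n. \<Sum>i\<le>n. if i \<le> d \<and> d - i \<le> n then scaleC (of_nat (m ^ d)) (scaleC (of_nat (q ^ i)) (E i (d - i))) else 0)"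
      by (rule regroup)
    also have "\<dots> = (\<Sum>d\<le>2*n. scaleC (of_nat (m ^ d)) (G q d))"
      by (simp add: G_def scale_sum_right if_distrib cong: if_cong)
    finally show ?thesis using 1 by simp
  qed
  have G0: "G q d = 0" if "n < d" "d \<le> 2*n" for q d
    using coeff_unique[OF vs, where N="2*n" and c="G q" and d="\<lambda>d. if d \<le> n then a d 0 (nsmul q t + s) else 0" and j=d]
      line that by auto
  have E0: "E i (d - i) = 0" if "n < d" "d \<le> 2*n" "i \<le> n" "i \<le> d" "d - i \<le> n" for i d
  proof -
    have "\<forall>q. (\<Sum>i\<le>n. scaleC (of_nat (q ^ i)) (if i \<le> d \<and> d - i \<le> n then E i (d - i) else 0))
         = (\<Sum>i\<le>n. scaleC (of_nat (q ^ i)) 0)"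
      using G0[OF that(1,2)] by (simp add: G_def if_distrib cong: if_cong)
    from coeff_unique[OF vs this that(3)] show ?thesis using that by simp
  qed
  have En: "E i n = 0" if "0 < i" "i \<le> n" for i
    using E0[of "i + n" i] that by simp
  have An: "a n (nsmul k t) s = E 0 n" for k
  proof -
    have "a n (nsmul k t) s = (\<Sum>i\<le>n. scaleC (of_nat (k ^ i)) (E i n))" by (rule A) simp
    also have "\<dots> = (\<Sum>i\<le>n. if i = 0 then E 0 n else 0)"
      by (intro sum.cong[OF refl]) (auto simp: En)
    also have "\<dots> = E 0 n" by (simp add: sum.delta')
    finally show ?thesis .
  qed
  show "a n t s = a n 0 s" using An[of 1] An[of 0] nsmul_1[of t] by simp
qed

end
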